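(* Let $G$ be a connected graph with $12$ vertices. Suppose one of the following holds: (1) $6\le \Delta(G)\le 8$ and $e(G)=12+k$ for some $1\le k\le 8$; (2) $\Delta(G)=9$ and $e(G)=12+k$ for some $1\le k\le 6$; (3) $\Delta(G)=10$ and $e(G)=12+k$ for some $1\le k\le 3$. Then $\frac{q(G)}{R(G)}<\frac{12}{\sqrt{11}}$.
   Context: All graphs are finite and simple; $e(G)$ is the number of edges and $\Delta(G)$ the maximum degree. For a vertex $u$, $d(u)$ is its degree. The Randić index is $R(G)=\sum_{\{u,v\}\in E(G)} \frac{1}{\sqrt{d(u)d(v)}}$. The signless Laplacian is $Q=D+A$ ($D$ the diagonal degree matrix, $A$ the adjacency matrix), and $q(G)$ is its largest eigenvalue. *)

theory Defs
  imports "Jordan_Normal_Form.Char_Poly"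
begin

definition simple_graph :: "nat \<Rightarrow> (nat \<Rightarrow> nat \<Rightarrow> bool) \<Rightarrow> bool" where
  "simple_graph n adj \<longleftrightarrow>
     (\<forall>u<n. \<forall>v<n. adj u v \<longrightarrow> adj v u) \<and> (\<forall>u<n. \<not> adj u u)"

definition connected_graph :: "nat \<Rightarrow> (nat \<Rightarrow> nat \<Rightarrow> bool) \<Rightarrow> bool" where
  "connected_graph n adj \<longleftrightarrow>
     (\<forall>u<n. \<forall>v<n. (\<lambda>x y. x < n \<and> y < n \<and> adj x y)\<^sup>*\<^sup>* u v)"

definition edges :: "nat \<Rightarrow> (nat \<Rightarrow> nat \<Rightarrow> bool) \<Rightarrow> nat set set" where
  "edges n adj = {{u, v} | u v. u < n \<and> v < n \<and> adj u v}"

definition num_edges :: "nat \<Rightarrow> (nat \<Rightarrow> nat \<Rightarrow> bool) \<Rightarrow> nat" where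
  "num_edges n adj = card (edges n adj)"

definition degree :: "nat \<Rightarrow> (nat \<Rightarrow> nat \<Rightarrow> bool) \<Rightarrow> nat \<Rightarrow> nat" where
  "degree n adj u = card {v. v < n \<and> adj u v}"

definition max_degree :: "nat \<Rightarrow> (nat \<Rightarrow> nat \<Rightarrow> bool) \<Rightarrow> nat" where
  "max_degree n adj = Max ((degree n adj) ` {0..<n})"

definition randic :: "nat \<Rightarrow> (nat \<Rightarrow> nat \<Rightarrow> bool) \<Rightarrow> real" where
  "randic n adj = (\<Sum>e\<in>edges n adj. 1 / sqrt (real (\<Prod>v\<in>e. degree n adj v)))"

definition signless_laplacian :: "nat \<Rightarrow> (nat \<Rightarrow> nat \<Rightarrow> bool) \<Rightarrow> real mat" where
  "signless_laplacian n adj =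
     mat n n (\<lambda>(i, j). (if i = j then real (degree n adj i) else 0) + (if adj i j then 1 else 0))"

definition q_index :: "nat \<Rightarrow> (nat \<Rightarrow> nat \<Rightarrow> bool) \<Rightarrow> real" where
  "q_index n adj = Max {k. eigenvalue (signless_laplacian n adj) k}"

end

theory Submission
  imports Defs "Jordan_Normal_Form.Spectral_Radius"
begin


lemma real_eig_exists:
  fixes A :: "real mat"
  assumes A: "A \<in> carrier_mat n n" and n: "n > 0"
    and sym: "\<And>i j. i < n \<Longrightarrow> j < n \<Longrightarrow> A $$ (i,j) = A $$ (j,i)"
  shows "\<exists>k. eigenvalue A k"
proof -
  define C where "C = map_mat complex_of_real A"
  have C: "C \<in> carrier_mat n n" using A unfolding C_def by auto
  from spectrum_non_empty[OF C n] obtain l where "eigenvalue C l"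
    unfolding spectrum_def by auto
  then obtain v where ev: "eigenvector C v l" unfolding eigenvalue_def by auto
  hence v: "v \<in> carrier_vec n" "v \<noteq> 0\<^sub>v n" "C *\<^sub>v v = l \<cdot>\<^sub>v v"
    using C unfolding eigenvector_def by auto
  have row: "(\<Sum>j<n. complex_of_real (A $$ (i,j)) * v $ j) = l * v $ i" if i: "i < n" for i
  proof -
    have "(C *\<^sub>v v) $ i = l * v $ i" using v(3) i v(1) by simp
    moreover have "(C *\<^sub>v v) $ i = (\<Sum>j<n. complex_of_real (A $$ (i,j)) * v $ j)"
      using i A v(1) unfolding C_def
      by (auto simp: scalar_prod_def lessThan_atLeast0 intro!: sum.cong)
    ultimately show ?thesis by simp
  qed
  define s where "s = (\<Sum>i<n. cnj (v $ i) * (\<Sum>j<n. complex_of_real (A $$ (i,j)) * v $ j))"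
  define N where "N = (\<Sum>i<n. cnj (v $ i) * v $ i)"
  have s1: "s = l * N" unfolding s_def N_def using row
    by (auto simp: sum_distrib_left intro!: sum.cong)
  have s2: "s = (\<Sum>i<n. \<Sum>j<n. cnj (v $ i) * complex_of_real (A $$ (i,j)) * v $ j)"
    unfolding s_def by (simp add: sum_distrib_left mult.assoc)
  have "cnj s = (\<Sum>i<n. \<Sum>j<n. v $ i * complex_of_real (A $$ (i,j)) * cnj (v $ j))"
    unfolding s2 by (simp add: cnj_sum)
  also have "\<dots> = (\<Sum>j<n. \<Sum>i<n. v $ i * complex_of_real (A $$ (i,j)) * cnj (v $ j))"
    by (rule sum.swap)
  also have "\<dots> = s" unfolding s2
    by (intro sum.cong refl, auto simp: sym mult.commute mult.left_commute)
  finally have cs: "cnj s = s" .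
  have Nr: "N = complex_of_real (\<Sum>i<n. (cmod (v $ i))^2)"
    unfolding N_def of_real_sum by (intro sum.cong refl) (metis complex_norm_square mult.commute)
  obtain i where i: "i < n" "v $ i \<noteq> 0" using v(1,2) by (metis eq_vecI carrier_vecD index_zero_vec)
  have "(\<Sum>i<n. (cmod (v $ i))^2) > 0"
  proof -
    have "(cmod (v $ i))^2 > 0" using i by simp
    moreover have "(cmod (v $ i))^2 \<le> (\<Sum>i<n. (cmod (v $ i))^2)"
      by (rule member_le_sum) (use i in auto)
    ultimately show ?thesis by linarith
  qed
  then obtain r where r: "N = complex_of_real r" "r > 0" using Nr by blast
  have "Im (cnj s) = Im s" using cs by simp
  hence "Im s = 0" by simp
  hence "Im l * r = 0" using s1 r(1) by simp
  hence "Im l = 0" using r(2) by simp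
  hence lr: "l = complex_of_real (Re l)" by (simp add: complex_eq_iff)
  have "eigenvalue C (complex_of_real (Re l))" using \<open>eigenvalue C l\<close> lr by simp
  hence "poly (char_poly C) (complex_of_real (Re l)) = 0"
    using eigenvalue_root_char_poly[OF C] by simp
  hence "poly (map_poly complex_of_real (char_poly A)) (complex_of_real (Re l)) = 0"
    unfolding C_def of_real_hom.char_poly_hom[OF A] .
  hence "poly (char_poly A) (Re l) = 0" by (simp add: of_real_hom.poly_map_poly)
  hence "eigenvalue A (Re l)" using eigenvalue_root_char_poly[OF A] by simp
  thus ?thesis by blast
qed


definition pairs :: "nat \<Rightarrow> (nat \<Rightarrow> nat \<Rightarrow> bool) \<Rightarrow> (nat \<times> nat) set" where
  "pairs n adj = {(u,v). u < n \<and> v < n \<and> adj u v}"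

lemma pairs_Sigma: "pairs n adj = Sigma {..<n} (\<lambda>u. {v. v < n \<and> adj u v})"
  unfolding pairs_def by auto

lemma finite_pairs: "finite (pairs n adj)"
  unfolding pairs_Sigma by auto

lemma pair_sum:
  fixes h :: "nat set \<Rightarrow> real"
  assumes sg: "simple_graph n adj"
  shows "(\<Sum>p\<in>pairs n adj. h {fst p, snd p}) = 2 * (\<Sum>e\<in>edges n adj. h e)"
proof -
  define P1 where "P1 = {p\<in>pairs n adj. fst p < snd p}"
  define P2 where "P2 = {p\<in>pairs n adj. snd p < fst p}"
  have irr: "\<And>u. u < n \<Longrightarrow> \<not> adj u u" and sym: "\<And>u v. u < n \<Longrightarrow> v < n \<Longrightarrow> adj u v \<Longrightarrow> adj v u"
    using sg unfolding simple_graph_def by auto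
  have PU: "pairs n adj = P1 \<union> P2"
  proof -
    have "p \<in> P1 \<union> P2" if pp: "p \<in> pairs n adj" for p
    proof -
      obtain u v where p: "p = (u,v)" "u < n" "v < n" "adj u v" using pp unfolding pairs_def by auto
      hence "u \<noteq> v" using irr by auto
      hence "u < v \<or> v < u" by arith
      thus ?thesis using p pp unfolding P1_def P2_def by auto
    qed
    thus ?thesis unfolding P1_def P2_def by blast
  qed
  have fin1: "finite P1" "finite P2" unfolding P1_def P2_def using finite_pairs by auto
  have dis: "P1 \<inter> P2 = {}" unfolding P1_def P2_def by auto
  have P2s: "P2 = prod.swap ` P1"
  proof (intro equalityI subsetI)
    fix p assume "p \<in> P2"
    then obtain u v where p: "p = (u,v)" "u < n" "v < n" "adj u v" "v < u"
      unfolding P2_def pairs_def by auto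
    have "(v,u) \<in> P1" using p sym[of u v] unfolding P1_def pairs_def by auto
    thus "p \<in> prod.swap ` P1" using p by (intro image_eqI[of _ _ "(v,u)"]) auto
  next
    fix p assume "p \<in> prod.swap ` P1"
    then obtain u v where p: "p = (v,u)" "(u,v) \<in> P1" by auto
    hence "u < n" "v < n" "adj u v" "u < v" unfolding P1_def pairs_def by auto
    thus "p \<in> P2" using sym[of u v] p(1) unfolding P2_def pairs_def by auto
  qed
  have s2: "(\<Sum>p\<in>P2. h {fst p, snd p}) = (\<Sum>p\<in>P1. h {fst p, snd p})"
    unfolding P2s by (subst sum.reindex) (auto simp: insert_commute)
  have E: "edges n adj = (\<lambda>p. {fst p, snd p}) ` P1" unfolding P1_def edges_def pairs_def
  proof (intro equalityI subsetI)
    fix e assume "e \<in> {{u, v} |u v. u < n \<and> v < n \<and> adj u v}"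
    then obtain u v where e: "e = {u,v}" "u < n" "v < n" "adj u v" by auto
    hence "u \<noteq> v" using irr by auto
    hence "u < v \<or> v < u" by arith
    thus "e \<in> (\<lambda>p. {fst p, snd p}) ` {p \<in> {(u, v). u < n \<and> v < n \<and> adj u v}. fst p < snd p}"
    proof
      assume "u < v" thus ?thesis using e by (intro image_eqI[of _ _ "(u,v)"]) auto
    next
      assume "v < u" thus ?thesis using e sym[of u v] by (intro image_eqI[of _ _ "(v,u)"]) (auto simp: insert_commute)
    qed
  next
    fix e assume "e \<in> (\<lambda>p. {fst p, snd p}) ` {p \<in> {(u, v). u < n \<and> v < n \<and> adj u v}. fst p < snd p}"
    then obtain u v where "e = {u,v}" "u < n" "v < n" "adj u v" by auto
    thus "e \<in> {{u, v} |u v. u < n \<and> v < n \<and> adj u v}" by blast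
  qed
  have inj: "inj_on (\<lambda>p. {fst p, snd p}) P1"
  proof (rule inj_onI)
    fix p q assume "p \<in> P1" "q \<in> P1" "{fst p, snd p} = {fst q, snd q}"
    thus "p = q" unfolding P1_def doubleton_eq_iff by (cases p, cases q) auto
  qed
  have "(\<Sum>e\<in>edges n adj. h e) = (\<Sum>p\<in>P1. h {fst p, snd p})"
    unfolding E by (subst sum.reindex[OF inj]) auto
  thus ?thesis unfolding PU sum.union_disjoint[OF fin1 dis] s2 by simp
qed

lemma card_pairs: "card (pairs n adj) = (\<Sum>u<n. degree n adj u)"
  unfolding pairs_Sigma degree_def by (simp add: card_SigmaI)

lemma handshake:
  assumes "simple_graph n adj"
  shows "(\<Sum>u<n. degree n adj u) = 2 * num_edges n adj"
proof -
  have "real (card (pairs n adj)) = (\<Sum>p\<in>pairs n adj. (\<lambda>e. 1::real) {fst p, snd p})" by simp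
  also have "\<dots> = 2 * real (num_edges n adj)" using pair_sum[OF assms, of "\<lambda>e. 1"] unfolding num_edges_def by simp
  finally show ?thesis unfolding card_pairs by linarith
qed

lemma sum_pairs_fst:
  fixes f :: "nat \<Rightarrow> real"
  shows "(\<Sum>p\<in>pairs n adj. f (fst p)) = (\<Sum>u<n. real (degree n adj u) * f u)"
proof -
  have "(\<Sum>u<n. real (degree n adj u) * f u) = (\<Sum>u<n. \<Sum>v\<in>{v. v < n \<and> adj u v}. f u)"
    unfolding degree_def by simp
  also have "\<dots> = (\<Sum>(u,v)\<in>pairs n adj. f u)" unfolding pairs_Sigma by (rule sum.Sigma) auto
  finally show ?thesis by (simp add: split_def)
qed

lemma sum_pairs_snd:
  fixes f :: "nat \<Rightarrow> real"
  assumes "simple_graph n adj"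
  shows "(\<Sum>p\<in>pairs n adj. f (snd p)) = (\<Sum>p\<in>pairs n adj. f (fst p))"
proof -
  have sym: "\<And>u v. u < n \<Longrightarrow> v < n \<Longrightarrow> adj u v \<Longrightarrow> adj v u"
    using assms unfolding simple_graph_def by auto
  have "pairs n adj = prod.swap ` pairs n adj"
  proof (intro equalityI subsetI)
    fix p assume "p \<in> pairs n adj"
    then obtain u v where p: "p = (u,v)" "u < n" "v < n" "adj u v" unfolding pairs_def by auto
    hence "(v,u) \<in> pairs n adj" using sym[of u v] unfolding pairs_def by auto
    thus "p \<in> prod.swap ` pairs n adj" using p(1) by (intro image_eqI[of _ _ "(v,u)"]) auto
  next
    fix p assume "p \<in> prod.swap ` pairs n adj"
    then obtain u v where p: "p = (v,u)" "(u,v) \<in> pairs n adj" by auto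
    hence "u < n" "v < n" "adj u v" unfolding pairs_def by auto
    thus "p \<in> pairs n adj" using sym[of u v] p(1) unfolding pairs_def by auto
  qed
  hence "(\<Sum>p\<in>pairs n adj. f (snd p)) = (\<Sum>p\<in>prod.swap ` pairs n adj. f (snd p))" by simp
  also have "\<dots> = (\<Sum>p\<in>pairs n adj. f (fst p))" by (subst sum.reindex) auto
  finally show ?thesis .
qed

lemma degree_pos:
  assumes "connected_graph n adj" "u < n" "w < n" "u \<noteq> w"
  shows "degree n adj u \<ge> 1"
proof -
  have "(\<lambda>x y. x < n \<and> y < n \<and> adj x y)\<^sup>*\<^sup>* u w" using assms unfolding connected_graph_def by auto
  then obtain x where x: "x < n" "adj u x"
  proof (cases rule: converse_rtranclpE)
    case base thus ?thesis using assms(4) by simp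
  next
    case (step y) thus ?thesis using that by blast
  qed
  have "x \<in> {v. v < n \<and> adj u v}" using x by simp
  hence "{v. v < n \<and> adj u v} \<noteq> {}" by blast
  moreover have "finite {v. v < n \<and> adj u v}" by simp
  ultimately have "card {v. v < n \<and> adj u v} > 0" using card_gt_0_iff by blast
  thus ?thesis unfolding degree_def by simp
qed

lemma degree_le_max: "u < n \<Longrightarrow> degree n adj u \<le> max_degree n adj"
  unfolding max_degree_def by (rule Max_ge) auto



lemma row_eq:
  assumes i: "i < n" and v: "v \<in> carrier_vec n"
  shows "(signless_laplacian n adj *\<^sub>v v) $ i
     = real (degree n adj i) * v $ i + (\<Sum>j\<in>{j. j < n \<and> adj i j}. v $ j)"
proof -
  have "(signless_laplacian n adj *\<^sub>v v) $ i
      = (\<Sum>j\<in>{0..<n}. ((if i = j then real (degree n adj i) else 0) + (if adj i j then 1 else 0)) * v $ j)"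
    using i v unfolding signless_laplacian_def by (auto simp: scalar_prod_def intro!: sum.cong)
  also have "\<dots> = (\<Sum>j\<in>{0..<n}. (if i = j then real (degree n adj i) * v $ j else 0))
              + (\<Sum>j\<in>{0..<n}. (if adj i j then v $ j else 0))"
    unfolding sum.distrib[symmetric] by (intro sum.cong refl) (simp add: distrib_right)
  also have "\<dots> = real (degree n adj i) * v $ i + (\<Sum>j\<in>{j. j < n \<and> adj i j}. v $ j)"
    using i by (simp add: sum.delta sum.inter_filter[symmetric] conj_commute)
  finally show ?thesis .
qed

lemma eig_bound:
  assumes dpos: "\<And>i. i < n \<Longrightarrow> degree n adj i \<ge> 1"
    and ev: "eigenvalue (signless_laplacian n adj) l"
  shows "\<exists>i<n. l * real (degree n adj i) \<le> real (degree n adj i)^2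
              + (\<Sum>j\<in>{j. j < n \<and> adj i j}. real (degree n adj j))"
proof -
  define d where "d j = real (degree n adj j)" for j
  have dp: "d j > 0" if "j < n" for j
  proof -
    have "degree n adj j \<ge> 1" using dpos[OF that] .
    thus ?thesis unfolding d_def by simp
  qed
  have dim: "dim_row (signless_laplacian n adj) = n" unfolding signless_laplacian_def by simp
  obtain v where "eigenvector (signless_laplacian n adj) v l" using ev unfolding eigenvalue_def by auto
  hence v: "v \<in> carrier_vec n" "v \<noteq> 0\<^sub>v n" "signless_laplacian n adj *\<^sub>v v = l \<cdot>\<^sub>v v"
    using dim unfolding eigenvector_def by auto
  have row: "l * v $ i = d i * v $ i + (\<Sum>j\<in>{j. j < n \<and> adj i j}. v $ j)" if "i < n" for i
    using row_eq[OF that v(1), of adj] v(3) that v(1) unfolding d_def by simp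
  obtain k where k: "k < n" "v $ k \<noteq> 0" using v(1,2) by (metis eq_vecI carrier_vecD index_zero_vec)
  define y where "y j = v $ j / d j" for j
  define M where "M = Max ((\<lambda>j. \<bar>y j\<bar>) ` {..<n})"
  have "M \<in> (\<lambda>j. \<bar>y j\<bar>) ` {..<n}" unfolding M_def using k by (intro Max_in) auto
  then obtain i where i: "i < n" "\<bar>y i\<bar> = M" by auto
  have ymax: "\<bar>y j\<bar> \<le> \<bar>y i\<bar>" if "j < n" for j
    unfolding i(2) M_def using that by (intro Max_ge) auto
  have "y k \<noteq> 0" using k dp[OF k(1)] unfolding y_def by simp
  hence ypos: "\<bar>y i\<bar> > 0" using ymax[OF k(1)] by linarith
  have vy: "v $ j = d j * y j" if "j < n" for j using dp[OF that] unfolding y_def by simp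
  define S where "S = (\<Sum>j\<in>{j. j < n \<and> adj i j}. d j)"
  have "(l - d i) * v $ i = (\<Sum>j\<in>{j. j < n \<and> adj i j}. v $ j)" using row[OF i(1)] by (simp add: algebra_simps)
  hence "\<bar>l - d i\<bar> * \<bar>v $ i\<bar> = \<bar>\<Sum>j\<in>{j. j < n \<and> adj i j}. v $ j\<bar>" by (metis abs_mult)
  also have "\<dots> \<le> (\<Sum>j\<in>{j. j < n \<and> adj i j}. \<bar>v $ j\<bar>)" by (rule sum_abs)
  also have "\<dots> \<le> (\<Sum>j\<in>{j. j < n \<and> adj i j}. d j * \<bar>y i\<bar>)"
  proof (rule sum_mono)
    fix j assume "j \<in> {j. j < n \<and> adj i j}"
    hence j: "j < n" by simp
    have "\<bar>v $ j\<bar> = d j * \<bar>y j\<bar>" using vy[OF j] dp[OF j] by (simp add: abs_mult)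
    also have "\<dots> \<le> d j * \<bar>y i\<bar>" using ymax[OF j] dp[OF j] by (simp add: mult_left_mono)
    finally show "\<bar>v $ j\<bar> \<le> d j * \<bar>y i\<bar>" .
  qed
  also have "\<dots> = S * \<bar>y i\<bar>" unfolding S_def by (simp add: sum_distrib_right)
  finally have "\<bar>l - d i\<bar> * \<bar>v $ i\<bar> \<le> S * \<bar>y i\<bar>" .
  moreover have "\<bar>v $ i\<bar> = d i * \<bar>y i\<bar>" using vy[OF i(1)] dp[OF i(1)] by (simp add: abs_mult)
  ultimately have "(\<bar>l - d i\<bar> * d i) * \<bar>y i\<bar> \<le> S * \<bar>y i\<bar>" by (simp add: mult.assoc)
  hence "\<bar>l - d i\<bar> * d i \<le> S" using ypos by simp
  moreover have "(l - d i) * d i \<le> \<bar>l - d i\<bar> * d i" using dp[OF i(1)] by (simp add: mult_right_mono)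
  ultimately have "l * d i \<le> (d i)^2 + S" by (simp add: algebra_simps power2_eq_square)
  thus ?thesis using i(1) unfolding S_def d_def by blast
qed



lemma S_le:
  assumes sg: "simple_graph n adj" and dpos: "\<And>j. j < n \<Longrightarrow> degree n adj j \<ge> 1" and i: "i < n"
  shows "(\<Sum>j\<in>{j. j < n \<and> adj i j}. degree n adj j) + (n - 1) \<le> 2 * num_edges n adj"
proof -
  define N where "N = {j. j < n \<and> adj i j}"
  define C where "C = {..<n} - N"
  have irr: "\<not> adj i i" using sg i unfolding simple_graph_def by auto
  have NS: "N \<subseteq> {..<n}" unfolding N_def by auto
  have hs: "(\<Sum>j<n. degree n adj j) = 2 * num_edges n adj" by (rule handshake[OF sg])
  have split: "(\<Sum>j<n. degree n adj j) = (\<Sum>j\<in>C. degree n adj j) + (\<Sum>j\<in>N. degree n adj j)"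
    unfolding C_def by (rule sum.subset_diff[OF NS]) simp
  have iC: "i \<in> C" unfolding C_def N_def using i irr by simp
  have finC: "finite C" unfolding C_def by simp
  have c1: "(\<Sum>j\<in>C. degree n adj j) = degree n adj i + (\<Sum>j\<in>C-{i}. degree n adj j)"
    by (rule sum.remove[OF finC iC])
  have c2: "(\<Sum>j\<in>C-{i}. degree n adj j) \<ge> (\<Sum>j\<in>C-{i}. 1)"
    by (rule sum_mono) (use dpos in \<open>auto simp: C_def\<close>)
  have cardN: "card N = degree n adj i" unfolding N_def degree_def by simp
  have cardC: "card C = n - degree n adj i" unfolding C_def using NS cardN
    by (simp add: card_Diff_subset finite_subset)
  have "N \<subseteq> {..<n} - {i}" unfolding N_def using irr by auto
  hence "card N \<le> n - 1" using card_mono[of "{..<n} - {i}" N] i by simp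
  hence dle: "degree n adj i \<le> n - 1" using cardN by simp
  have "card (C - {i}) = n - degree n adj i - 1" using cardC iC finC by simp
  hence "(\<Sum>j\<in>C. degree n adj j) \<ge> n - 1" using c1 c2 dle by simp
  thus ?thesis using hs split unfolding N_def by linarith
qed

lemma S_le2:
  assumes i: "i < n"
  shows "(\<Sum>j\<in>{j. j < n \<and> adj i j}. degree n adj j) \<le> degree n adj i * max_degree n adj"
proof -
  have "(\<Sum>j\<in>{j. j < n \<and> adj i j}. degree n adj j) \<le> (\<Sum>j\<in>{j. j < n \<and> adj i j}. max_degree n adj)"
    by (rule sum_mono) (simp add: degree_le_max)
  also have "\<dots> = degree n adj i * max_degree n adj" unfolding degree_def by simp
  finally show ?thesis .
qed

lemma arith_q:
  fixes d D S m :: nat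
  assumes "1 \<le> d" "d \<le> D" "S \<le> d * D" "S + 11 \<le> 2 * m"
    and "(D \<le> 8 \<and> m \<le> 20) \<or> (D = 9 \<and> m \<le> 18) \<or> (D = 10 \<and> m \<le> 15)"
  shows "d * d + S < 12 * d"
proof -
  have "D \<le> 10" using assms(5) by auto
  hence "d \<le> 10" using assms(2) by simp
  hence "d = 1 \<or> d = 2 \<or> d = 3 \<or> d = 4 \<or> d = 5 \<or> d = 6 \<or> d = 7 \<or> d = 8 \<or> d = 9 \<or> d = 10"
    using assms(1) by presburger
  then show ?thesis using assms by (elim disjE) auto
qed



lemma pair_ineq:
  fixes a b :: real
  assumes "1 \<le> a" "a \<le> 10" "1 \<le> b" "b \<le> 10"
  shows "1 / sqrt (a * b) \<ge> (1 / sqrt 10) * (1 / sqrt a + 1 / sqrt b) - 1 / 10"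
proof -
  define A where "A = 1 / sqrt 10"
  define x where "x = 1 / sqrt a"
  define y where "y = 1 / sqrt b"
  have "sqrt a \<le> sqrt 10" "sqrt a > 0" using assms by auto
  hence xA: "x \<ge> A" unfolding x_def A_def by (simp add: frac_le)
  have "sqrt b \<le> sqrt 10" "sqrt b > 0" using assms by auto
  hence yA: "y \<ge> A" unfolding y_def A_def by (simp add: frac_le)
  have "(x - A) * (y - A) \<ge> 0" using xA yA by simp
  hence "x * y - A * x - A * y + A * A \<ge> 0" by (simp add: algebra_simps)
  moreover have "A * A = 1 / 10" unfolding A_def by simp
  moreover have "x * y = 1 / sqrt (a * b)" unfolding x_def y_def by (simp add: real_sqrt_mult)
  ultimately show ?thesis unfolding A_def[symmetric] x_def[symmetric] y_def[symmetric]
    by (simp add: algebra_simps)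
qed

lemma chord:
  fixes a :: real
  assumes "1 \<le> a" "a \<le> 10"
  shows "sqrt a \<ge> 1 + (a - 1) / (1 + sqrt 10)"
proof -
  define s where "s = sqrt a"
  define S where "S = sqrt 10"
  have s1: "1 \<le> s" unfolding s_def using assms by simp
  have sS: "s \<le> S" unfolding s_def S_def using assms by simp
  have S0: "S > 0" unfolding S_def by simp
  have "(s - 1) * (S - s) \<ge> 0" using s1 sS by simp
  moreover have "s * s = a" unfolding s_def using assms by simp
  ultimately have "a - 1 \<le> (s - 1) * (1 + S)" by (simp add: algebra_simps)
  hence "(a - 1) / (1 + S) \<le> s - 1" using S0 by (simp add: pos_divide_le_eq)
  thus ?thesis unfolding s_def S_def by simp
qed

lemma R_lower:
  assumes sg: "simple_graph n adj"
    and dd: "\<And>u. u < n \<Longrightarrow> 1 \<le> degree n adj u \<and> degree n adj u \<le> 10"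
  shows "randic n adj \<ge> (\<Sum>u<n. sqrt (real (degree n adj u))) / sqrt 10 - real (num_edges n adj) / 10"
proof -
  define d where "d u = real (degree n adj u)" for u
  define P where "P = pairs n adj"
  define A where "A = 1 / sqrt 10"
  have irr: "\<And>u. u < n \<Longrightarrow> \<not> adj u u" using sg unfolding simple_graph_def by auto
  have "(\<Sum>p\<in>P. (\<lambda>e. 1 / sqrt (real (\<Prod>v\<in>e. degree n adj v))) {fst p, snd p}) = 2 * randic n adj"
    unfolding P_def randic_def by (rule pair_sum[OF sg])
  moreover have "(\<Sum>p\<in>P. (\<lambda>e. 1 / sqrt (real (\<Prod>v\<in>e. degree n adj v))) {fst p, snd p})
     = (\<Sum>p\<in>P. 1 / sqrt (d (fst p) * d (snd p)))"
  proof (rule sum.cong[OF refl])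
    fix p assume "p \<in> P"
    then obtain u v where p: "p = (u,v)" "u < n" "adj u v" unfolding P_def pairs_def by auto
    hence "u \<noteq> v" using irr by auto
    thus "(\<lambda>e. 1 / sqrt (real (\<Prod>v\<in>e. degree n adj v))) {fst p, snd p} = 1 / sqrt (d (fst p) * d (snd p))"
      using p unfolding d_def by simp
  qed
  ultimately have R2: "2 * randic n adj = (\<Sum>p\<in>P. 1 / sqrt (d (fst p) * d (snd p)))" by simp
  have "(\<Sum>p\<in>P. 1 / sqrt (d (fst p) * d (snd p)))
      \<ge> (\<Sum>p\<in>P. A * (1 / sqrt (d (fst p))) + A * (1 / sqrt (d (snd p))) - 1 / 10)"
  proof (rule sum_mono)
    fix p assume "p \<in> P"
    then obtain u v where p: "p = (u,v)" "u < n" "v < n" unfolding P_def pairs_def by auto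
    have "1 \<le> d u" "d u \<le> 10" "1 \<le> d v" "d v \<le> 10" using dd[OF p(2)] dd[OF p(3)] unfolding d_def by auto
    from pair_ineq[OF this] show "A * (1 / sqrt (d (fst p))) + A * (1 / sqrt (d (snd p))) - 1 / 10
        \<le> 1 / sqrt (d (fst p) * d (snd p))" using p unfolding A_def by (simp add: algebra_simps)
  qed
  also have "(\<Sum>p\<in>P. A * (1 / sqrt (d (fst p))) + A * (1 / sqrt (d (snd p))) - 1 / 10)
     = A * (\<Sum>p\<in>P. 1 / sqrt (d (fst p))) + A * (\<Sum>p\<in>P. 1 / sqrt (d (snd p))) - real (card P) / 10"
    by (simp add: sum.distrib sum_subtractf sum_distrib_left)
  also have "(\<Sum>p\<in>P. 1 / sqrt (d (snd p))) = (\<Sum>p\<in>P. 1 / sqrt (d (fst p)))"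
    unfolding P_def by (rule sum_pairs_snd[OF sg])
  also have "(\<Sum>p\<in>P. 1 / sqrt (d (fst p))) = (\<Sum>u<n. d u * (1 / sqrt (d u)))"
    unfolding P_def d_def by (rule sum_pairs_fst)
  also have "\<dots> = (\<Sum>u<n. sqrt (d u))"
  proof (rule sum.cong[OF refl])
    fix u assume "u \<in> {..<n}"
    have "d u \<ge> 0" unfolding d_def by simp
    thus "d u * (1 / sqrt (d u)) = sqrt (d u)" using real_div_sqrt[of "d u"] by simp
  qed
  also have "real (card P) = 2 * real (num_edges n adj)"
    unfolding P_def card_pairs using handshake[OF sg] by (metis of_nat_mult of_nat_numeral)
  finally have "2 * randic n adj \<ge> 2 * (A * (\<Sum>u<n. sqrt (d u))) - 2 * real (num_edges n adj) / 10"
    using R2 by simp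
  thus ?thesis unfolding A_def d_def by simp
qed



lemma R_num:
  assumes sg: "simple_graph 12 adj"
    and dd: "\<And>u. u < 12 \<Longrightarrow> 1 \<le> degree 12 adj u \<and> degree 12 adj u \<le> 10"
    and m: "num_edges 12 adj \<ge> 13"
  shows "randic 12 adj \<ge> 7 / 2"
proof -
  define S where "S = sqrt 10"
  define m' where "m' = real (num_edges 12 adj)"
  define T where "T = (\<Sum>u<12. sqrt (real (degree 12 adj u)))"
  have S1: "S \<le> 3.17" unfolding S_def by (rule real_le_lsqrt) (auto simp: power2_eq_square)
  have S2: "3.1 \<le> S" unfolding S_def by (rule real_le_rsqrt) (auto simp: power2_eq_square)
  have "T \<ge> (\<Sum>u<(12::nat). 1 + (real (degree 12 adj u) - 1) / (1 + S))"
    unfolding T_def S_def by (rule sum_mono) (use dd in \<open>auto intro!: chord\<close>)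
  also have "(\<Sum>u<(12::nat). 1 + (real (degree 12 adj u) - 1) / (1 + S))
        = 12 + ((\<Sum>u<(12::nat). real (degree 12 adj u)) - 12) / (1 + S)"
    by (simp add: sum.distrib sum_divide_distrib[symmetric] sum_subtractf)
  also have "(\<Sum>u<(12::nat). real (degree 12 adj u)) = 2 * m'"
    unfolding m'_def using handshake[OF sg] by (metis of_nat_mult of_nat_numeral of_nat_sum)
  finally have T1: "T \<ge> 12 + (2 * m' - 12) / (1 + S)" .
  have m13: "m' \<ge> 13" unfolding m'_def using m by simp
  have dl: "(2 * m' - 12) / (417/100) \<le> (2 * m' - 12) / (1 + S)"
    by (rule divide_left_mono) (use S1 S2 m13 in auto)
  have "12 + (2 * m' - 12) * (100/417) = 12 + (2 * m' - 12) / (417/100)" by simp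
  also have "\<dots> \<le> 12 + (2 * m' - 12) / (1 + S)" using dl by simp
  also have "\<dots> \<le> T" by (rule T1)
  finally have "12 + (2 * m' - 12) * (100/417) \<le> T" .
  moreover have "12 + (2 * m' - 12) * (100/417) = 12 + m' * (200/417) - 1200/417"
    by (simp add: field_simps)
  ultimately have T2: "12 + m' * (200/417) - 1200/417 \<le> T" by simp
  have T0: "T \<ge> 0" unfolding T_def by (simp add: sum_nonneg)
  have dl2: "T / (317/100) \<le> T / S" by (rule divide_left_mono) (use S1 S2 T0 in auto)
  have "T * (100/317) - m' * (1/10) = T / (317/100) - m' / 10" by simp
  also have "\<dots> \<le> T / S - m' / 10" using dl2 by simp
  also have "\<dots> \<le> randic 12 adj"
    using R_lower[OF sg dd] unfolding T_def S_def m'_def by simp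
  finally have "T * (100/317) - m' * (1/10) \<le> randic 12 adj" .
  thus ?thesis using T2 m13 by linarith
qed



lemma eig_lt_12:
  assumes sg: "simple_graph 12 adj"
    and dpos: "\<And>u. u < 12 \<Longrightarrow> degree 12 adj u \<ge> 1"
    and hc: "(max_degree 12 adj \<le> 8 \<and> num_edges 12 adj \<le> 20) \<or> (max_degree 12 adj = 9 \<and> num_edges 12 adj \<le> 18)
       \<or> (max_degree 12 adj = 10 \<and> num_edges 12 adj \<le> 15)"
    and ev: "eigenvalue (signless_laplacian 12 adj) l"
  shows "l < 12"
proof -
  obtain i where i: "i < 12" and li: "l * real (degree 12 adj i) \<le> real (degree 12 adj i)^2
              + (\<Sum>j\<in>{j. j < 12 \<and> adj i j}. real (degree 12 adj j))"
    using eig_bound[OF dpos ev] by blast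
  define d where "d = degree 12 adj i"
  define S where "S = (\<Sum>j\<in>{j. j < 12 \<and> adj i j}. degree 12 adj j)"
  have "d * d + S < 12 * d"
  proof (rule arith_q)
    show "1 \<le> d" unfolding d_def by (rule dpos[OF i])
    show "d \<le> max_degree 12 adj" unfolding d_def by (rule degree_le_max[OF i])
    show "S \<le> d * max_degree 12 adj" unfolding S_def d_def by (rule S_le2[OF i])
    have "S + (12 - 1) \<le> 2 * num_edges 12 adj" unfolding S_def by (rule S_le[OF sg dpos i])
    thus "S + 11 \<le> 2 * num_edges 12 adj" by simp
    show "max_degree 12 adj \<le> 8 \<and> num_edges 12 adj \<le> 20 \<or> max_degree 12 adj = 9 \<and> num_edges 12 adj \<le> 18 \<or>
      max_degree 12 adj = 10 \<and> num_edges 12 adj \<le> 15" by (rule hc)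
  qed
  hence "real d * real d + real S < 12 * real d" by (metis of_nat_add of_nat_mult of_nat_less_iff of_nat_numeral)
  moreover have "real S = (\<Sum>j\<in>{j. j < 12 \<and> adj i j}. real (degree 12 adj j))" unfolding S_def by simp
  ultimately have "l * real d < 12 * real d" using li unfolding d_def by (simp add: power2_eq_square)
  moreover have "real d > 0" unfolding d_def using dpos[OF i] by simp
  ultimately show ?thesis by simp
qed

theorem lemma3p6:
  fixes adj :: "nat \<Rightarrow> nat \<Rightarrow> bool"
  assumes "simple_graph 12 adj"
    and "connected_graph 12 adj"
    and "(6 \<le> max_degree 12 adj \<and> max_degree 12 adj \<le> 8 \<and>
           (\<exists>k. 1 \<le> k \<and> k \<le> 8 \<and> num_edges 12 adj = 12 + k))
       \<or> (max_degree 12 adj = 9 \<and> (\<exists>k. 1 \<le> k \<and> k \<le> 6 \<and> num_edges 12 adj = 12 + k))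
       \<or> (max_degree 12 adj = 10 \<and> (\<exists>k. 1 \<le> k \<and> k \<le> 3 \<and> num_edges 12 adj = 12 + k))"
  shows "q_index 12 adj / randic 12 adj < 12 / sqrt 11"
proof -
  note sg = assms(1) and cg = assms(2)
  have hc: "(max_degree 12 adj \<le> 8 \<and> num_edges 12 adj \<le> 20) \<or> (max_degree 12 adj = 9 \<and> num_edges 12 adj \<le> 18)
       \<or> (max_degree 12 adj = 10 \<and> num_edges 12 adj \<le> 15)" using assms(3) by auto
  have m13: "num_edges 12 adj \<ge> 13" using assms(3) by auto
  have D10: "max_degree 12 adj \<le> 10" using hc by auto
  have dpos: "degree 12 adj u \<ge> 1" if "u < 12" for u
    using degree_pos[OF cg that, of "if u = 0 then 1 else 0"] by auto
  have dd: "1 \<le> degree 12 adj u \<and> degree 12 adj u \<le> 10" if "u < 12" for u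
    using dpos[OF that] degree_le_max[OF that, of adj] D10 by simp
  have R: "randic 12 adj \<ge> 7 / 2" by (rule R_num[OF sg dd m13])
  define Q where "Q = signless_laplacian 12 adj"
  have Qc: "Q \<in> carrier_mat 12 12" unfolding Q_def signless_laplacian_def by simp
  have sym: "Q $$ (i,j) = Q $$ (j,i)" if "i < 12" "j < 12" for i j
  proof -
    have "adj i j = adj j i" using sg that unfolding simple_graph_def by blast
    thus ?thesis using that unfolding Q_def signless_laplacian_def by auto
  qed
  obtain k0 where k0: "eigenvalue Q k0" using real_eig_exists[OF Qc _ sym] by auto
  have fin: "finite {k. eigenvalue Q k}" using card_finite_spectrum(1)[OF Qc] unfolding spectrum_def .
  have "q_index 12 adj \<in> {k. eigenvalue Q k}" unfolding q_index_def Q_def[symmetric]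
    using fin k0 by (intro Max_in) auto
  hence q12: "q_index 12 adj < 12" using eig_lt_12[OF sg dpos hc] unfolding Q_def by auto
  have s11: "sqrt 11 \<le> 7 / 2" by (rule real_le_lsqrt) (auto simp: power2_eq_square)
  have Rpos: "randic 12 adj > 0" using R by simp
  have s0: "sqrt 11 > 0" by simp
  have "q_index 12 adj / randic 12 adj < 12 / randic 12 adj"
    using q12 Rpos by (simp add: divide_strict_right_mono)
  also have "\<dots> \<le> 12 / sqrt 11"
    by (rule divide_left_mono) (use R s11 s0 in auto)
  finally show ?thesis .
qed


end
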